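(* Let $|p|<1$ and let $a,b,c,d,q,r,s,t$ be nonzero complex numbers such that all expressions below are well defined. Then for every integer $n\ge0$, \begin{align*} &\sum_{k=0}^n\frac{\theta\big(ad(rst/q)^k,\,br^k/(dq^k),\,cs^k/(dq^k),\,adt^k/(bcq^k);p\big)}{\theta\big(ad,\,b/d,\,c/d,\,ad/(bc);p\big)}\\ &\qquad\times\frac{(a;rst/q^2,p)_k(b;r,p)_k(c;s,p)_k(ad^2/(bc);t,p)_k}{(dq;q,p)_k(adst/(bq);st/q,p)_k(adrt/(cq);rt/q,p)_k(bcrs/(dq);rs/q,p)_k}\,q^k\\ &=\frac{\theta(a,b,c,ad^2/(bc);p)}{d\,\theta(ad,b/d,c/d,ad/(bc);p)}\cdot\frac{(arst/q^2;rst/q^2,p)_n(br;r,p)_n(cs;s,p)_n(ad^2t/(bc);t,p)_n}{(dq;q,p)_n(adst/(bq);st/q,p)_n(adrt/(cq);rt/q,p)_n(bcrs/(dq);rs/q,p)_n}\\ &\quad-\frac{\theta(d,ad/b,ad/c,bc/d;p)}{d\,\theta(ad,b/d,c/d,ad/(bc);p)}. \end{align*}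
   Context: For $|p|<1$ and $x\neq 0$, $\theta(x;p)=(x;p)_\infty(p/x;p)_\infty$ where $(x;p)_\infty=\prod_{k\ge 0}(1-xp^k)$, and $\theta(x_1,\dots,x_m;p)=\prod_{i=1}^m\theta(x_i;p)$. For $a\ne0$ and integer $k\ge0$, $(a;q,p)_k=\prod_{j=0}^{k-1}\theta(aq^j;p)$ (empty product $=1$). Here e.g. $rst/q^2$ denotes $rst/(q^2)$ and $(rst/q)^k=(rst/q)^k$. *)

theory Defs
  imports "HOL-Analysis.Analysis"
begin

definition qpoch_inf :: "complex \<Rightarrow> complex \<Rightarrow> complex" where
  "qpoch_inf x p = (\<Prod>k. (1 - x * p ^ k))"

definition theta :: "complex \<Rightarrow> complex \<Rightarrow> complex" where
  "theta x p = qpoch_inf x p * qpoch_inf (p / x) p"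

definition etheta_poch :: "complex \<Rightarrow> complex \<Rightarrow> complex \<Rightarrow> nat \<Rightarrow> complex" where
  "etheta_poch a q p k = (\<Prod>j<k. theta (a * q ^ j) p)"

end

theory Submission
  imports Defs
begin

definition qp :: "complex \<Rightarrow> complex \<Rightarrow> nat \<Rightarrow> complex" where
  "qp x q n = (\<Prod>k<n. (1 - x * q ^ k))"

lemma qp_0[simp]: "qp x q 0 = 1" by (simp add: qp_def)
lemma qp_Suc: "qp x q (Suc n) = qp x q n * (1 - x * q ^ n)" by (simp add: qp_def)
lemma qp_Suc': "qp x q (Suc n) = (1 - x) * qp (x*q) q n"
  unfolding qp_def by (subst prod.lessThan_Suc_shift) (simp add: mult.assoc)

lemma qpoch_conv:
  fixes x q :: complex
  assumes "norm q < 1"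
  shows "convergent_prod (\<lambda>k. 1 - x * q ^ k)"
proof -
  have "summable (\<lambda>k. norm x * norm q ^ k)"
    by (intro summable_mult summable_geometric) (use assms in auto)
  moreover have "norm ((1 - x * q ^ k) - 1) = norm x * norm q ^ k" for k
    by (simp add: norm_mult norm_power)
  ultimately have "summable (\<lambda>k. norm ((1 - x * q ^ k) - 1))" by simp
  hence "abs_convergent_prod (\<lambda>k. 1 - x * q ^ k)" by (rule summable_imp_abs_convergent_prod)
  thus ?thesis by (rule abs_convergent_prod_imp_convergent_prod)
qed

lemma qp_lim:
  assumes "norm q < 1"
  shows "(\<lambda>n. qp x q n) \<longlonglongrightarrow> qpoch_inf x q"
proof -
  have "(\<lambda>n. \<Prod>i\<le>n. 1 - x * q ^ i) \<longlonglongrightarrow> qpoch_inf x q"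
    unfolding qpoch_inf_def by (rule convergent_prod_LIMSEQ[OF qpoch_conv[OF assms]])
  hence "(\<lambda>n. qp x q (Suc n)) \<longlonglongrightarrow> qpoch_inf x q"
    by (simp add: qp_def lessThan_Suc_atMost)
  thus ?thesis by (rule LIMSEQ_imp_Suc)
qed

lemma theta_lim:
  assumes "norm q < 1"
  shows "(\<lambda>n. qp x q n * qp (q/x) q n) \<longlonglongrightarrow> theta x q"
  unfolding theta_def by (intro tendsto_mult qp_lim assms)

fun gb :: "complex \<Rightarrow> nat \<Rightarrow> nat \<Rightarrow> complex" where
  "gb q n 0 = 1"
| "gb q 0 (Suc k) = 0"
| "gb q (Suc n) (Suc k) = gb q n k + q ^ Suc k * gb q n (Suc k)"

definition T :: "nat \<Rightarrow> nat" where "T k = (\<Sum>i<k. i)"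
lemma T_0[simp]: "T 0 = 0" by (simp add: T_def)
lemma T_Suc: "T (Suc k) = T k + k" by (simp add: T_def)
lemma T_add: "T (a + b) = T a + T b + a * b"
  by (induction b) (auto simp: T_Suc)
lemma T_double: "2 * T k + k = k * k"
  by (induction k) (auto simp: T_Suc)

lemma gb_gt: "k > n \<Longrightarrow> gb q n k = 0"
proof (induction n arbitrary: k)
  case 0 thus ?case by (cases k) auto
next
  case (Suc n) thus ?case by (cases k) auto
qed

lemma qbinomial:
  "qp z q n = (\<Sum>k\<le>n. gb q n k * (-1)^k * q ^ T k * z ^ k)"
proof (induction n arbitrary: z)
  case 0 thus ?case by simp
next
  case (Suc n)
  have "qp z q (Suc n) = (1 - z) * (\<Sum>k\<le>n. gb q n k * (-1)^k * q ^ T k * (z*q) ^ k)"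
    by (simp add: qp_Suc' Suc.IH)
  also have "\<dots> = (\<Sum>k\<le>n. gb q n k * (-1)^k * q ^ T k * q^k * z ^ k)
       - (\<Sum>k\<le>n. gb q n k * (-1)^k * q ^ T k * q^k * z ^ Suc k)"
    unfolding left_diff_distrib sum_distrib_left by (simp add: power_mult_distrib mult_ac sum_subtractf)
  also have "(\<Sum>k\<le>n. gb q n k * (-1)^k * q ^ T k * q^k * z ^ k)
      = (\<Sum>k\<le>Suc n. gb q n k * (-1)^k * q ^ T k * q^k * z ^ k)"
    by (simp add: gb_gt)
  also have "\<dots> = 1 + (\<Sum>k\<le>n. gb q n (Suc k) * (-1)^Suc k * q ^ T (Suc k) * q^Suc k * z ^ Suc k)"
    by (subst sum.atMost_Suc_shift) simp
  also have "(\<Sum>k\<le>n. gb q n k * (-1)^k * q ^ T k * q^k * z ^ Suc k)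
      = - (\<Sum>k\<le>n. gb q n k * (-1)^Suc k * q ^ T (Suc k) * z ^ Suc k)"
    by (simp add: T_Suc power_add sum_negf[symmetric] algebra_simps)
  finally have "qp z q (Suc n) = 1 + (\<Sum>k\<le>n. (gb q n k + q ^ Suc k * gb q n (Suc k)) * (-1)^Suc k * q ^ T (Suc k) * z ^ Suc k)"
    by (simp add: algebra_simps sum.distrib sum_subtractf sum_negf)
  also have "\<dots> = (\<Sum>k\<le>Suc n. gb q (Suc n) k * (-1)^k * q ^ T k * z ^ k)"
    by (subst sum.atMost_Suc_shift) simp
  finally show ?case .
qed

lemma gb_closed:
  "k \<le> n \<Longrightarrow> gb q n k * qp q q k * qp q q (n - k) = qp q q n"
proof (induction n arbitrary: k)
  case 0 thus ?case by simp
next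
  case (Suc n)
  show ?case
  proof (cases k)
    case 0 thus ?thesis by simp
  next
    case (Suc j)
    with Suc.prems have jn: "j \<le> n" by simp
    have first: "gb q n j * qp q q (Suc j) * qp q q (n - j) = qp q q n * (1 - q ^ Suc j)"
      using Suc.IH[OF jn] by (simp add: qp_Suc algebra_simps)
    have second: "q ^ Suc j * gb q n (Suc j) * qp q q (Suc j) * qp q q (n - j) = qp q q n * (q ^ Suc j - q ^ Suc n)"
    proof (cases "j = n")
      case True thus ?thesis by (simp add: gb_gt)
    next
      case False
      hence jn': "Suc j \<le> n" using jn by simp
      have nj: "n - j = Suc (n - Suc j)" using jn' by simp
      have pw: "q ^ Suc j * (q * q ^ (n - Suc j)) = q ^ Suc n"
      proof -
        have "Suc j + Suc (n - Suc j) = Suc n" using jn' by simp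
        thus ?thesis by (metis power_add power_Suc)
      qed
      have "q ^ Suc j * gb q n (Suc j) * qp q q (Suc j) * qp q q (n - j)
          = q ^ Suc j * (gb q n (Suc j) * qp q q (Suc j) * qp q q (n - Suc j)) * (1 - q * q ^ (n - Suc j))"
        by (simp add: nj qp_Suc algebra_simps)
      also have "\<dots> = q ^ Suc j * qp q q n * (1 - q * q ^ (n - Suc j))"
        using Suc.IH[OF jn'] by simp
      also have "q ^ Suc j * qp q q n * (1 - q * q ^ (n - Suc j)) = qp q q n * (q ^ Suc j - q ^ Suc j * (q * q ^ (n - Suc j)))"
        by (simp only: algebra_simps mult_1_left)
      also have "\<dots> = qp q q n * (q ^ Suc j - q ^ Suc n)"
        by (simp only: pw)
      finally show ?thesis .
    qed
    have "gb q (Suc n) k * qp q q k * qp q q (Suc n - k)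
        = gb q n j * qp q q (Suc j) * qp q q (n - j) + q ^ Suc j * gb q n (Suc j) * qp q q (Suc j) * qp q q (n - j)"
      by (simp add: Suc algebra_simps)
    also have "\<dots> = qp q q n * (1 - q ^ Suc n)" unfolding first second by (simp add: algebra_simps)
    also have "\<dots> = qp q q (Suc n)" by (simp add: qp_Suc)
    finally show ?thesis .
  qed
qed

lemma exp_le_one_minus:
  fixes y r :: real
  assumes "0 \<le> y" "y \<le> r" "r < 1"
  shows "exp (- y / (1 - r)) \<le> 1 - y"
proof -
  have y1: "y < 1" using assms by simp
  have "1 + y / (1 - y) \<le> exp (y / (1 - y))" by (rule exp_ge_add_one_self)
  moreover have "1 + y / (1 - y) = 1 / (1 - y)" using y1 by (simp add: field_simps)
  ultimately have h: "1 / (1 - y) \<le> exp (y / (1 - y))" by simp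
  have "y / (1 - y) \<le> y / (1 - r)" by (rule divide_left_mono) (use assms y1 in auto)
  hence "exp (- y / (1 - r)) \<le> exp (- y / (1 - y))" by simp
  also have "\<dots> = 1 / exp (y / (1 - y))" by (simp add: exp_minus field_simps)
  also have "\<dots> \<le> 1 - y"
  proof -
    have "1 / exp (y / (1 - y)) \<le> 1 / (1 / (1 - y))"
      by (rule divide_left_mono[OF h]) (use y1 in auto)
    thus ?thesis using y1 by simp
  qed
  finally show ?thesis .
qed

lemma geo_partial:
  fixes r :: real
  assumes "0 \<le> r" "r < 1"
  shows "(\<Sum>k<m. r ^ Suc k) \<le> r / (1 - r)"
proof -
  have "(\<Sum>k<m. r ^ Suc k) = r * (\<Sum>k<m. r ^ k)" by (simp add: sum_distrib_left)
  also have "\<dots> = r * ((1 - r ^ m) / (1 - r))" using assms by (simp add: sum_gp_strict)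
  also have "\<dots> \<le> r / (1 - r)"
  proof -
    have "r * (1 - r ^ m) \<le> r" using assms by (intro mult_left_le) auto
    thus ?thesis using assms by (simp add: divide_right_mono)
  qed
  finally show ?thesis .
qed

lemma qpq_upper:
  fixes q :: complex
  assumes "norm q < 1"
  shows "norm (qp q q m) \<le> exp (norm q / (1 - norm q))"
proof -
  have "norm (qp q q m) = (\<Prod>k<m. norm (1 - q * q ^ k))"
    by (simp add: qp_def prod_norm)
  also have "\<dots> \<le> (\<Prod>k<m. exp (norm q ^ Suc k))"
  proof (rule prod_mono)
    fix k assume "k \<in> {..<m}"
    have "norm (1 - q * q ^ k) \<le> 1 + norm q ^ Suc k"
      by (metis norm_one norm_power norm_triangle_ineq4 power_Suc)
    also have "\<dots> \<le> exp (norm q ^ Suc k)" by (rule exp_ge_add_one_self)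
    finally show "0 \<le> norm (1 - q * q ^ k) \<and> norm (1 - q * q ^ k) \<le> exp (norm q ^ Suc k)" by simp
  qed
  also have "\<dots> = exp (\<Sum>k<m. norm q ^ Suc k)" by (simp add: exp_sum)
  also have "\<dots> \<le> exp (norm q / (1 - norm q))"
    using geo_partial[of "norm q" m] assms by simp
  finally show ?thesis .
qed

lemma qpq_lower:
  fixes q :: complex
  assumes "norm q < 1"
  shows "exp (- (norm q / (1 - norm q) / (1 - norm q))) \<le> norm (qp q q m)"
proof -
  let ?r = "norm q"
  have "exp (- (?r / (1 - ?r) / (1 - ?r))) \<le> exp (- (\<Sum>k<m. ?r ^ Suc k) / (1 - ?r))"
  proof -
    have "(\<Sum>k<m. ?r ^ Suc k) / (1 - ?r) \<le> ?r / (1 - ?r) / (1 - ?r)"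
      using geo_partial[of ?r m] assms by (intro divide_right_mono) auto
    thus ?thesis by simp
  qed
  also have "\<dots> = (\<Prod>k<m. exp (- (?r ^ Suc k) / (1 - ?r)))"
    by (simp add: exp_sum[symmetric] sum_divide_distrib sum_negf)
  also have "\<dots> \<le> (\<Prod>k<m. norm (1 - q * q ^ k))"
  proof (rule prod_mono)
    fix k assume "k \<in> {..<m}"
    have "?r ^ Suc k \<le> ?r" using assms by (simp add: power_le_one mult_left_le)
    hence "exp (- (?r ^ Suc k) / (1 - ?r)) \<le> 1 - ?r ^ Suc k"
      using assms by (intro exp_le_one_minus) auto
    also have "\<dots> \<le> norm (1 - q * q ^ k)"
      by (metis norm_one norm_power norm_triangle_ineq2 power_Suc)
    finally show "0 \<le> exp (- (?r ^ Suc k) / (1 - ?r)) \<and> exp (- (?r ^ Suc k) / (1 - ?r)) \<le> norm (1 - q * q ^ k)"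
      by simp
  qed
  also have "\<dots> = norm (qp q q m)" by (simp add: qp_def prod_norm)
  finally show ?thesis .
qed

definition Lw :: "complex \<Rightarrow> real" where "Lw q = exp (- (norm q / (1 - norm q) / (1 - norm q)))"
definition Up :: "complex \<Rightarrow> real" where "Up q = exp (norm q / (1 - norm q))"

lemma qpq_nz: "norm q < 1 \<Longrightarrow> qp q q m \<noteq> 0"
  using qpq_lower[of q m] by (auto simp del: exp_minus)

lemma P_nz:
  assumes "norm q < 1"
  shows "qpoch_inf q q \<noteq> 0"
proof -
  have "(\<lambda>n. norm (qp q q n)) \<longlonglongrightarrow> norm (qpoch_inf q q)"
    by (intro tendsto_norm qp_lim assms)
  hence "Lw q \<le> norm (qpoch_inf q q)"
    by (rule tendsto_lowerbound) (use qpq_lower[OF assms] in \<open>auto simp: Lw_def\<close>)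
  moreover have "Lw q > 0" by (simp add: Lw_def)
  ultimately show ?thesis by auto
qed

lemma gb_eq:
  assumes "norm q < 1" "k \<le> n"
  shows "gb q n k = qp q q n / (qp q q k * qp q q (n - k))"
  using gb_closed[OF assms(2), of q] qpq_nz[OF assms(1)] by (simp add: field_simps)

lemma gb_bound:
  assumes "norm q < 1"
  shows "norm (gb q n k) \<le> Up q / (Lw q * Lw q)"
proof (cases "k \<le> n")
  case False thus ?thesis by (simp add: gb_gt Up_def Lw_def)
next
  case True
  have "norm (gb q n k) = norm (qp q q n) / (norm (qp q q k) * norm (qp q q (n - k)))"
    by (simp add: gb_eq[OF assms True] norm_divide norm_mult)
  also have "\<dots> \<le> Up q / (Lw q * Lw q)"
    using qpq_upper[OF assms, of n] qpq_lower[OF assms, of k] qpq_lower[OF assms, of "n-k"]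
    unfolding Up_def Lw_def
    by (intro frac_le mult_mono) (auto simp del: exp_minus)
  finally show ?thesis .
qed

definition Ci :: "int \<Rightarrow> int" where "Ci n = n * (n - 1) div 2"
definition jt :: "complex \<Rightarrow> complex \<Rightarrow> int \<Rightarrow> complex" where
  "jt q z n = (-1) powi n * q powi (Ci n) * z powi n"

lemma Ci_eq: "n * (n - 1) = 2 * a \<Longrightarrow> Ci n = a"
  by (simp add: Ci_def)

lemma T_int: "int m * (int m - 1) = 2 * int (T m)"
proof -
  have "int (2 * T m + m) = int (m * m)" by (simp only: T_double)
  thus ?thesis by (simp add: algebra_simps)
qed

lemma jt_pos: "jt q z (int i) = (-1)^i * q ^ T i * z ^ i"
proof -
  have "Ci (int i) = int (T i)" by (rule Ci_eq) (simp add: T_int)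
  thus ?thesis by (simp add: jt_def)
qed

lemma jt_neg: "jt q z (- int i - 1) = - ((-1)^i) * q ^ T (Suc (Suc i)) / z ^ Suc i"
proof -
  have e: "- int i - 1 = - int (Suc i)" by simp
  have "Ci (- int (Suc i)) = int (T (Suc (Suc i)))"
  proof (rule Ci_eq)
    have "int (Suc (Suc i)) * (int (Suc (Suc i)) - 1) = 2 * int (T (Suc (Suc i)))" by (rule T_int)
    thus "- int (Suc i) * (- int (Suc i) - 1) = 2 * int (T (Suc (Suc i)))" by (simp add: algebra_simps)
  qed
  hence "jt q z (- int (Suc i)) = (-1) powi (int (Suc i)) * q powi (int (T (Suc (Suc i)))) * inverse (z powi int (Suc i))"
    by (simp only: jt_def power_int_minus_one_minus) (simp only: power_int_minus)
  hence "jt q z (- int (Suc i)) = (-1) ^ (Suc i) * q ^ (T (Suc (Suc i))) * inverse (z ^ (Suc i))"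
    by (simp only: power_int_of_nat)
  thus ?thesis unfolding e by (simp add: divide_inverse)
qed

lemma qp_add: "qp z q (a + b) = qp z q a * qp (z * q ^ a) q b"
  by (induction b) (simp_all add: qp_Suc power_add algebra_simps)

lemma step1:
  assumes "q \<noteq> 0" "x \<noteq> 0"
  shows "qp (q/x) q N * x ^ N = (-1)^N * q ^ T (Suc N) * (\<Prod>k<N. 1 - x / q ^ Suc k)"
proof (induction N)
  case 0 thus ?case by (simp add: T_Suc)
next
  case (Suc N)
  have "qp (q/x) q (Suc N) * x ^ Suc N = (qp (q/x) q N * x ^ N) * ((1 - q / x * q ^ N) * x)"
    by (simp add: qp_Suc algebra_simps)
  also have "(1 - q / x * q ^ N) * x = - (q ^ Suc N) * (1 - x / q ^ Suc N)"
    using assms by (simp add: field_simps)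
  also note Suc.IH
  finally show ?case by (simp add: T_Suc power_add algebra_simps)
qed

lemma step2:
  assumes "q \<noteq> 0"
  shows "qp (x / q ^ N) q (N + N) = (\<Prod>k<N. 1 - x / q ^ Suc k) * qp x q N"
proof -
  have "qp (x / q ^ N) q (N + N) = qp (x / q ^ N) q N * qp x q N"
    using assms by (simp add: qp_add)
  also have "qp (x / q ^ N) q N = (\<Prod>k<N. 1 - x / q ^ N * q ^ (N - Suc k))"
    unfolding qp_def by (rule prod.nat_diff_reindex[symmetric])
  also have "\<dots> = (\<Prod>k<N. 1 - x / q ^ Suc k)"
  proof (rule prod.cong)
    fix k assume "k \<in> {..<N}"
    hence "N = Suc k + (N - Suc k)" by simp
    hence "q ^ N = q ^ Suc k * q ^ (N - Suc k)" by (metis power_add)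
    thus "1 - x / q ^ N * q ^ (N - Suc k) = 1 - x / q ^ Suc k" using assms by (simp add: field_simps)
  qed simp
  finally show ?thesis .
qed

lemma finite_jtp:
  assumes q: "q \<noteq> 0" and x: "x \<noteq> 0"
  shows "qp x q N * qp (q/x) q N =
    (\<Sum>i\<le>N. gb q (N+N) (N+i) * jt q x (int i)) + (\<Sum>i<N. gb q (N+N) (N - Suc i) * jt q x (- int i - 1))"
proof -
  define c where "c k = (-1)^N * q ^ T (Suc N) * ((-1)^k * q ^ T k * (x / q^N) ^ k) / x ^ N" for k
  have "qp x q N * qp (q/x) q N * x ^ N = qp x q N * (qp (q/x) q N * x ^ N)"
    by (simp only: mult.assoc)
  also have "\<dots> = qp x q N * ((-1)^N * q ^ T (Suc N) * (\<Prod>k<N. 1 - x / q ^ Suc k))"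
    by (simp only: step1[OF q x])
  also have "\<dots> = (-1)^N * q ^ T (Suc N) * ((\<Prod>k<N. 1 - x / q ^ Suc k) * qp x q N)"
    by (simp only: ac_simps)
  also have "\<dots> = (-1)^N * q ^ T (Suc N) * qp (x / q ^ N) q (N + N)"
    by (simp only: step2[OF q])
  finally have "qp x q N * qp (q/x) q N * x ^ N = (-1)^N * q ^ T (Suc N) * qp (x / q ^ N) q (N + N)" .
  hence "qp x q N * qp (q/x) q N = (-1)^N * q ^ T (Suc N) * qp (x / q ^ N) q (N + N) / x ^ N"
    using x by (simp add: field_simps)
  also have "\<dots> = (\<Sum>k\<le>N+N. gb q (N+N) k * c k)"
    unfolding qbinomial c_def by (simp add: sum_distrib_left sum_divide_distrib algebra_simps)
  also have "{..N+N} = {..<N} \<union> {0+N..N+N}" by auto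
  also have "(\<Sum>k\<in>{..<N} \<union> {0+N..N+N}. gb q (N+N) k * c k)
     = (\<Sum>k<N. gb q (N+N) k * c k) + (\<Sum>k\<in>{0+N..N+N}. gb q (N+N) k * c k)"
    by (rule sum.union_disjoint) auto
  also have "(\<Sum>k\<in>{0+N..N+N}. gb q (N+N) k * c k) = (\<Sum>i\<in>{0..N}. gb q (N+N) (i+N) * c (i+N))"
    by (rule sum.shift_bounds_cl_nat_ivl)
  also have "(\<Sum>k<N. gb q (N+N) k * c k) = (\<Sum>i<N. gb q (N+N) (N - Suc i) * c (N - Suc i))"
    by (rule sum.nat_diff_reindex[symmetric])
  also have "(\<Sum>i\<in>{0..N}. gb q (N+N) (i+N) * c (i+N)) = (\<Sum>i\<le>N. gb q (N+N) (N+i) * jt q x (int i))"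
  proof (rule sum.cong)
    fix i assume "i \<in> {..N}"
    have e: "T (Suc N) + T (i + N) = T i + N * (N + i)"
      using T_double[of N] by (simp add: T_Suc T_add algebra_simps)
    have "c (i+N) = (-1)^(N+(i+N)) * q ^ (T (Suc N) + T (i+N)) * x^(i+N) / (q ^ (N*(i+N)) * x ^ N)"
      unfolding c_def by (simp add: power_add power_divide power_mult algebra_simps)
    also have "\<dots> = (-1)^i * q ^ T i * x ^ i"
      unfolding e using q x by (simp add: power_add power_mult_distrib field_simps)
    finally show "gb q (N+N) (i+N) * c (i+N) = gb q (N+N) (N+i) * jt q x (int i)"
      by (simp add: jt_pos add.commute)
  qed auto
  also have "(\<Sum>i<N. gb q (N+N) (N - Suc i) * c (N - Suc i)) = (\<Sum>i<N. gb q (N+N) (N - Suc i) * jt q x (- int i - 1))"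
  proof (rule sum.cong)
    fix i assume "i \<in> {..<N}"
    define k where "k = N - Suc i"
    have Nk: "N = k + Suc i" using \<open>i \<in> {..<N}\<close> by (simp add: k_def)
    have e: "T (Suc N) + T k = T (Suc (Suc i)) + N * k"
      unfolding Nk using T_double[of k] by (simp add: T_Suc T_add algebra_simps)
    have "c k = (-1)^(N+k) * q ^ (T (Suc N) + T k) * x^k / (q ^ (N*k) * x ^ (k + Suc i))"
      unfolding c_def by (subst (3) Nk) (simp add: power_add power_divide power_mult algebra_simps)
    also have "\<dots> = - ((-1)^i) * q ^ T (Suc (Suc i)) / x ^ Suc i"
    proof -
      have s: "(-1::complex)^(N+k) = - ((-1)^i)"
        unfolding Nk by (simp add: power_add) 
      show ?thesis
        unfolding e s using q x by (simp add: power_add field_simps)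
    qed
    finally show "gb q (N+N) (N - Suc i) * c (N - Suc i) = gb q (N+N) (N - Suc i) * jt q x (- int i - 1)"
      by (simp add: jt_neg k_def)
  qed auto
  finally show ?thesis by (simp add: add.commute)
qed

lemma L0:
  fixes r \<rho> :: real
  assumes "0 \<le> r" "r < 1" "0 \<le> \<rho>"
  shows "summable (\<lambda>n. r ^ T n * \<rho> ^ n)"
proof -
  have "(\<lambda>n. r ^ n * \<rho>) \<longlonglongrightarrow> 0 * \<rho>"
    by (intro tendsto_mult LIMSEQ_power_zero tendsto_const) (use assms in auto)
  hence "eventually (\<lambda>n. r ^ n * \<rho> < 1/2) sequentially"
    by (intro order_tendstoD) auto
  then obtain N where N: "\<And>n. n \<ge> N \<Longrightarrow> r ^ n * \<rho> < 1/2"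
    unfolding eventually_sequentially by auto
  show ?thesis
  proof (rule summable_ratio_test[of "1/2" N])
    fix n assume "n \<ge> N"
    have "norm (r ^ T (Suc n) * \<rho> ^ Suc n) = (r ^ n * \<rho>) * (r ^ T n * \<rho> ^ n)"
      using assms by (simp add: T_Suc power_add abs_mult algebra_simps)
    also have "\<dots> \<le> 1/2 * (r ^ T n * \<rho> ^ n)"
      using N[OF \<open>n \<ge> N\<close>] assms by (intro mult_right_mono) auto
    also have "\<dots> = 1/2 * norm (r ^ T n * \<rho> ^ n)" using assms by simp
    finally show "norm (r ^ T (Suc n) * \<rho> ^ Suc n) \<le> 1/2 * norm (r ^ T n * \<rho> ^ n)" .
  qed simp
qed

lemma jt_sum_pos:
  assumes "norm q < 1"
  shows "summable (\<lambda>n. norm (jt q z (int n)))"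
proof -
  have "summable (\<lambda>n. norm q ^ T n * norm z ^ n)" by (rule L0) (use assms in auto)
  thus ?thesis by (simp add: jt_pos norm_mult norm_power)
qed

lemma jt_sum_neg:
  assumes "norm q < 1"
  shows "summable (\<lambda>n. norm (jt q z (- int n - 1)))"
proof -
  let ?r = "norm q" and ?z = "norm z"
  have "summable (\<lambda>n. ?r ^ T n * (?r * ?r / ?z) ^ n)" by (rule L0) (use assms in auto)
  hence "summable (\<lambda>n. ?r ^ T n * (?r * ?r / ?z) ^ n * (?r / ?z))" by (rule summable_mult2)
  moreover have "norm (jt q z (- int n - 1)) = ?r ^ T n * (?r * ?r / ?z) ^ n * (?r / ?z)" for n
    by (simp add: jt_neg norm_mult norm_power norm_divide T_Suc power_add power_divide
        power_mult_distrib field_simps)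
  ultimately show ?thesis by simp
qed

lemma Z_split: "(UNIV :: int set) = range int \<union> range (\<lambda>n. - int n - 1)"
proof -
  have "m \<in> range int \<union> range (\<lambda>n. - int n - 1)" for m :: int
  proof (cases "m \<ge> 0")
    case True thus ?thesis by (auto intro: image_eqI[of _ _ "nat m"])
  next
    case False hence "m = - int (nat (- m - 1)) - 1" by simp
    thus ?thesis by blast
  qed
  thus ?thesis by auto
qed

lemma Z_sum:
  fixes h :: "int \<Rightarrow> complex"
  assumes "summable (\<lambda>n. norm (h (int n)))" "summable (\<lambda>n. norm (h (- int n - 1)))"
  shows "Infinite_Set_Sum.abs_summable_on h UNIV"
    and "infsetsum h UNIV = (\<Sum>n. h (int n)) + (\<Sum>n. h (- int n - 1))"
proof -
  have i1: "inj_on int UNIV" by (simp add: inj_on_def)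
  have i2: "inj_on (\<lambda>n::nat. - int n - 1) UNIV" by (simp add: inj_on_def)
  have a1: "Infinite_Set_Sum.abs_summable_on (\<lambda>n. h (int n)) UNIV" using assms(1) by (simp add: abs_summable_on_nat_iff')
  have a2: "Infinite_Set_Sum.abs_summable_on (\<lambda>n. h (- int n - 1)) UNIV" using assms(2) by (simp add: abs_summable_on_nat_iff')
  have b1: "Infinite_Set_Sum.abs_summable_on h (range int)" using a1 abs_summable_on_reindex_iff[OF i1] by blast
  have b2: "Infinite_Set_Sum.abs_summable_on h (range (\<lambda>n. - int n - 1))" using a2 abs_summable_on_reindex_iff[OF i2] by blast
  show "Infinite_Set_Sum.abs_summable_on h UNIV" by (subst Z_split) (intro abs_summable_on_union b1 b2)
  have "infsetsum h UNIV = infsetsum h (range int) + infsetsum h (range (\<lambda>n. - int n - 1))"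
    by (subst Z_split) (rule infsetsum_Un_disjoint[OF b1 b2], auto)
  also have "infsetsum h (range int) = (\<Sum>n. h (int n))"
    using infsetsum_reindex[OF i1, of h] infsetsum_nat'[OF a1] by simp
  also have "infsetsum h (range (\<lambda>n. - int n - 1)) = (\<Sum>n. h (- int n - 1))"
    using infsetsum_reindex[OF i2, of h] infsetsum_nat'[OF a2] by simp
  finally show "infsetsum h UNIV = (\<Sum>n. h (int n)) + (\<Sum>n. h (- int n - 1))" .
qed

lemma jt_abs_summable: "norm q < 1 \<Longrightarrow> Infinite_Set_Sum.abs_summable_on (jt q z) UNIV"
  using Z_sum(1)[OF jt_sum_pos jt_sum_neg] by blast

lemma seq_comp:
  assumes "X \<longlonglongrightarrow> L" "\<And>N. N \<le> g N + c"
  shows "(\<lambda>N. X (g N)) \<longlonglongrightarrow> L"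
proof -
  have "filterlim g at_top at_top"
    unfolding filterlim_at_top eventually_at_top_linorder
  proof
    fix Z show "\<exists>N0. \<forall>N\<ge>N0. Z \<le> g N" using assms(2) by (intro exI[of _ "Z + c"]) (metis add_le_cancel_right le_trans)
  qed
  thus ?thesis using assms(1) by (rule filterlim_compose[rotated])
qed

lemma tannery_part:
  fixes q :: complex and t :: "nat \<Rightarrow> complex" and g :: "nat \<Rightarrow> nat \<Rightarrow> complex"
  assumes q: "norm q < 1"
    and t: "summable (\<lambda>i. norm (t i))"
    and lim: "\<And>i. (\<lambda>N. g N i) \<longlonglongrightarrow> 1 / qpoch_inf q q"
    and bnd: "\<And>N i. norm (g N i) \<le> Up q / (Lw q * Lw q)"
  shows "(\<lambda>N. \<Sum>i\<le>N. g N i * t i) \<longlonglongrightarrow> (\<Sum>i. t i) / qpoch_inf q q"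
proof -
  define a where "a i N = (if i \<le> N then g N i * t i else 0)" for i N
  define Bg where "Bg = Up q / (Lw q * Lw q)"
  have "eventually (\<lambda>N. summable (\<lambda>i. norm (a i N))) sequentially \<and>
        summable (\<lambda>i. norm (t i / qpoch_inf q q)) \<and>
        ((\<lambda>N. suminf (\<lambda>i. a i N)) \<longlongrightarrow> suminf (\<lambda>i. t i / qpoch_inf q q)) sequentially"
  proof (rule tannerys_theorem[where M = "\<lambda>i. Bg * norm (t i)"])
    fix i
    have "(\<lambda>N. g N i * t i) \<longlonglongrightarrow> 1 / qpoch_inf q q * t i"
      by (intro tendsto_mult lim tendsto_const)
    moreover have "eventually (\<lambda>N. g N i * t i = a i N) sequentially"
      unfolding eventually_sequentially a_def by (intro exI[of _ i]) auto
    ultimately show "(\<lambda>N. a i N) \<longlonglongrightarrow> t i / qpoch_inf q q"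
      by (auto elim: Lim_transform_eventually)
  next
    show "eventually (\<lambda>(i, N). norm (a i N) \<le> Bg * norm (t i)) (at_top \<times>\<^sub>F sequentially)"
    proof (intro always_eventually, clarify)
      fix i N
      have Bg0: "0 \<le> Bg" by (simp add: Bg_def Up_def Lw_def)
      show "norm (a i N) \<le> Bg * norm (t i)"
      proof (cases "i \<le> N")
        case True
        have "norm (a i N) = norm (g N i) * norm (t i)" using True by (simp add: a_def norm_mult)
        also have "\<dots> \<le> Bg * norm (t i)" unfolding Bg_def by (intro mult_right_mono bnd) auto
        finally show ?thesis .
      qed (use Bg0 in \<open>simp add: a_def\<close>)
    qed
  next
    show "summable (\<lambda>i. Bg * norm (t i))" by (intro summable_mult t)
  qed simp
  hence "(\<lambda>N. suminf (\<lambda>i. a i N)) \<longlonglongrightarrow> suminf (\<lambda>i. t i / qpoch_inf q q)" by blast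
  moreover have "suminf (\<lambda>i. a i N) = (\<Sum>i\<le>N. g N i * t i)" for N
    by (subst suminf_finite[of "{..N}"]) (auto simp: a_def)
  moreover have "suminf (\<lambda>i. t i / qpoch_inf q q) = (\<Sum>i. t i) / qpoch_inf q q"
    using summable_norm_cancel[OF t] by (rule suminf_divide)
  ultimately show ?thesis by simp
qed

lemma gb_lim_pos:
  assumes q: "norm q < 1"
  shows "(\<lambda>N. if i \<le> N then gb q (N+N) (N+i) else 0) \<longlonglongrightarrow> 1 / qpoch_inf q q"
proof -
  have L: "qp q q \<longlonglongrightarrow> qpoch_inf q q" using qp_lim[OF q] by simp
  have "(\<lambda>N. qp q q (N+N) / (qp q q (N+i) * qp q q (N - i))) \<longlonglongrightarrow> qpoch_inf q q / (qpoch_inf q q * qpoch_inf q q)"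
    by (intro tendsto_divide tendsto_mult seq_comp[OF L, where c=0] seq_comp[OF L, where c=i])
       (auto simp: P_nz[OF q])
  moreover have "eventually (\<lambda>N. qp q q (N+N) / (qp q q (N+i) * qp q q (N - i)) = (if i \<le> N then gb q (N+N) (N+i) else 0)) sequentially"
    unfolding eventually_sequentially
    by (intro exI[of _ i] allI impI) (simp add: gb_eq[OF q])
  ultimately show ?thesis using P_nz[OF q] by (auto elim: Lim_transform_eventually)
qed

lemma gb_lim_neg:
  assumes q: "norm q < 1"
  shows "(\<lambda>N. if i < N then gb q (N+N) (N - Suc i) else 0) \<longlonglongrightarrow> 1 / qpoch_inf q q"
proof -
  have L: "qp q q \<longlonglongrightarrow> qpoch_inf q q" using qp_lim[OF q] by simp
  have "(\<lambda>N. qp q q (N+N) / (qp q q (N - Suc i) * qp q q (N + Suc i))) \<longlonglongrightarrow> qpoch_inf q q / (qpoch_inf q q * qpoch_inf q q)"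
    by (intro tendsto_divide tendsto_mult seq_comp[OF L, where c=0] seq_comp[OF L, where c="Suc i"])
       (auto simp: P_nz[OF q])
  moreover have "eventually (\<lambda>N. qp q q (N+N) / (qp q q (N - Suc i) * qp q q (N + Suc i)) = (if i < N then gb q (N+N) (N - Suc i) else 0)) sequentially"
    unfolding eventually_sequentially
  proof (intro exI[of _ "Suc i"] allI impI)
    fix N assume "Suc i \<le> N"
    hence "N + N - (N - Suc i) = N + Suc i" by simp
    thus "qp q q (N+N) / (qp q q (N - Suc i) * qp q q (N + Suc i)) = (if i < N then gb q (N+N) (N - Suc i) else 0)"
      using \<open>Suc i \<le> N\<close> by (simp add: gb_eq[OF q])
  qed
  ultimately show ?thesis using P_nz[OF q] by (auto elim: Lim_transform_eventually)
qed

theorem jtp: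
  assumes q: "norm q < 1" "q \<noteq> 0" and x: "x \<noteq> 0"
  shows "qpoch_inf q q * theta x q = infsetsum (jt q x) UNIV"
proof -
  define gp where "gp N i = (if i \<le> N then gb q (N+N) (N+i) else 0)" for N i
  define gn where "gn N i = (if i < N then gb q (N+N) (N - Suc i) else 0)" for N i
  have bnd: "norm (if c then gb q n k else 0) \<le> Up q / (Lw q * Lw q)" for c n k
    using gb_bound[OF q(1), of n k] by (auto simp: Up_def Lw_def)
  have A1: "(\<lambda>N. \<Sum>i\<le>N. gp N i * jt q x (int i)) \<longlonglongrightarrow> (\<Sum>i. jt q x (int i)) / qpoch_inf q q"
    by (rule tannery_part[OF q(1) jt_sum_pos[OF q(1)]]) (use gb_lim_pos[OF q(1)] bnd in \<open>auto simp: gp_def\<close>)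
  have A2: "(\<lambda>N. \<Sum>i\<le>N. gn N i * jt q x (- int i - 1)) \<longlonglongrightarrow> (\<Sum>i. jt q x (- int i - 1)) / qpoch_inf q q"
    by (rule tannery_part[OF q(1) jt_sum_neg[OF q(1)]]) (use gb_lim_neg[OF q(1)] bnd in \<open>auto simp: gn_def\<close>)
  have e1: "(\<Sum>i\<le>N. gp N i * jt q x (int i)) = (\<Sum>i\<le>N. gb q (N+N) (N+i) * jt q x (int i))" for N
    by (rule sum.cong) (auto simp: gp_def)
  have e2: "(\<Sum>i\<le>N. gn N i * jt q x (- int i - 1)) = (\<Sum>i<N. gb q (N+N) (N - Suc i) * jt q x (- int i - 1))" for N
  proof -
    have "(\<Sum>i\<le>N. gn N i * jt q x (- int i - 1)) = (\<Sum>i<Suc N. gn N i * jt q x (- int i - 1))"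
      by (simp add: lessThan_Suc_atMost)
    also have "\<dots> = (\<Sum>i<N. gn N i * jt q x (- int i - 1))" by (simp add: gn_def)
    also have "\<dots> = (\<Sum>i<N. gb q (N+N) (N - Suc i) * jt q x (- int i - 1))"
      by (rule sum.cong) (auto simp: gn_def)
    finally show ?thesis .
  qed
  have "(\<lambda>N. qp x q N * qp (q/x) q N) \<longlonglongrightarrow> (\<Sum>i. jt q x (int i)) / qpoch_inf q q + (\<Sum>i. jt q x (- int i - 1)) / qpoch_inf q q"
    using tendsto_add[OF A1 A2] unfolding e1 e2 finite_jtp[OF q(2) x] .
  moreover have "(\<lambda>N. qp x q N * qp (q/x) q N) \<longlonglongrightarrow> theta x q" by (rule theta_lim[OF q(1)])
  ultimately have "theta x q = (\<Sum>i. jt q x (int i)) / qpoch_inf q q + (\<Sum>i. jt q x (- int i - 1)) / qpoch_inf q q"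
    using LIMSEQ_unique by blast
  also have "\<dots> = infsetsum (jt q x) UNIV / qpoch_inf q q"
    using Z_sum(2)[OF jt_sum_pos[OF q(1)] jt_sum_neg[OF q(1)]] by (simp add: add_divide_distrib)
  finally show ?thesis using P_nz[OF q(1)] by (simp add: field_simps)
qed

lemma Ci2: "2 * Ci n = n * (n - 1)"
proof -
  have "even (n * (n - 1))" by auto
  thus ?thesis by (simp add: Ci_def)
qed

lemma padd: "(z::complex) \<noteq> 0 \<Longrightarrow> z powi (m + n) = z powi m * z powi n"
  by (rule power_int_add) simp

definition S :: "complex \<Rightarrow> complex \<Rightarrow> complex" where
  "S q z = infsetsum (jt q z) UNIV"

definition gt :: "complex \<Rightarrow> int \<Rightarrow> complex \<Rightarrow> int \<Rightarrow> complex" where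
  "gt q c w j = q powi (j * j + c * j) * w powi j"

definition G :: "complex \<Rightarrow> int \<Rightarrow> complex \<Rightarrow> complex" where
  "G q c w = infsetsum (gt q c w) UNIV"

lemma gt_jt:
  assumes q: "q \<noteq> 0"
  shows "gt q c w j = jt (q^2) (- (q powi (c+1)) * w) j"
proof -
  have m: "(- (q powi (c+1)) * w) powi j = (-1) powi j * ((q powi (c+1)) powi j * w powi j)"
  proof -
    have "- (q powi (c+1)) * w = (-1) * ((q powi (c+1)) * w)" by simp
    thus ?thesis by (simp only: power_int_mult_distrib)
  qed
  have pq: "(q^2) powi Ci j = q powi (2 * Ci j)" by (simp add: power_int_power)
  have pc: "(q powi (c+1)) powi j = q powi ((c+1) * j)" by (simp add: power_int_mult)
  have "jt (q^2) (- (q powi (c+1)) * w) j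
      = ((-1) powi j * (-1) powi j) * (q powi (2 * Ci j) * q powi ((c+1) * j)) * w powi j"
    unfolding jt_def m pq pc by (simp only: mult_ac)
  also have "\<dots> = q powi (2 * Ci j + (c+1) * j) * w powi j"
    using q by (simp add: padd)
  also have "2 * Ci j + (c+1) * j = j * j + c * j" by (simp only: Ci2) (simp add: algebra_simps)
  finally show ?thesis by (simp add: gt_def)
qed

lemma gt_summable:
  assumes "norm q < 1" "q \<noteq> 0"
  shows "Infinite_Set_Sum.abs_summable_on (gt q c w) UNIV"
proof -
  have "norm (q^2) < 1" using assms by (simp add: norm_power power_less_one_iff abs_square_less_1)
  hence "Infinite_Set_Sum.abs_summable_on (jt (q^2) (- (q powi (c+1)) * w)) UNIV"
    by (rule jt_abs_summable)
  thus ?thesis by (subst abs_summable_on_cong[OF gt_jt[OF assms(2)] refl])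
qed

lemma prod_infsetsum:
  fixes f g :: "int \<Rightarrow> complex"
  assumes "Infinite_Set_Sum.abs_summable_on f UNIV" "Infinite_Set_Sum.abs_summable_on g UNIV"
  shows "infsetsum (\<lambda>(i,j). f i * g j) UNIV = infsetsum f UNIV * infsetsum g UNIV"
  using infsetsum_product[of "UNIV::int set" "UNIV::int set" f g] assms by simp

lemma pm1_even: "(-1::complex) powi (2 * i) = 1"
  by (simp add: power_int_mult)

lemma K0:
  assumes q: "norm q < 1" "q \<noteq> 0" and a: "a \<noteq> 0" and b: "b \<noteq> 0"
  shows "S q a * S q b = G q (-1) (a*b) * G q 0 (a/b) - a * (G q 0 (a*b) * G q 1 (a/b))"
proof -
  define F where "F = (\<lambda>(n,m). jt q a n * jt q b m)"
  define \<phi>0 :: "int \<times> int \<Rightarrow> int \<times> int" where "\<phi>0 = (\<lambda>(i,j). (i+j, i-j))"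
  define \<phi>1 :: "int \<times> int \<Rightarrow> int \<times> int" where "\<phi>1 = (\<lambda>(i,j). (i+j+1, i-j))"
  have sF: "Infinite_Set_Sum.abs_summable_on F UNIV"
    using abs_summable_on_product[of "UNIV::int set" "UNIV::int set" "jt q a" "jt q b"]
      jt_abs_summable[OF q(1)] by (simp add: F_def)
  have SS: "S q a * S q b = infsetsum F UNIV"
    unfolding S_def F_def by (subst prod_infsetsum[symmetric]) (auto intro: jt_abs_summable[OF q(1)])
  have split: "UNIV = range \<phi>0 \<union> range \<phi>1"
  proof -
    have "x \<in> range \<phi>0 \<union> range \<phi>1" for x
    proof (cases x)
      case (Pair n m)
      show ?thesis
      proof (cases "even (n - m)")
        case True
        from True obtain j where j: "n - m = 2 * j" by (rule evenE)
        have "x = \<phi>0 (m + j, j)" using j Pair by (simp add: \<phi>0_def)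
        thus ?thesis by blast
      next
        case False
        from False obtain j where j: "n - m = 2 * j + 1" by (rule oddE)
        have "x = \<phi>1 (m + j, j)" using j Pair by (simp add: \<phi>1_def)
        thus ?thesis by blast
      qed
    qed
    thus ?thesis by auto
  qed
  have disj: "range \<phi>0 \<inter> range \<phi>1 = {}"
  proof -
    have "\<phi>0 x \<noteq> \<phi>1 y" for x y
    proof
      assume "\<phi>0 x = \<phi>1 y"
      then obtain i j i' j' where "x = (i,j)" "y = (i',j')" "i + j = i' + j' + 1" "i - j = i' - j'"
        by (cases x, cases y) (auto simp: \<phi>0_def \<phi>1_def)
      hence "2 * j = 2 * j' + 1" by simp
      thus False by presburger
    qed
    thus ?thesis by blast
  qed
  have inj0: "inj \<phi>0" by (auto simp: inj_on_def \<phi>0_def)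
  have inj1: "inj \<phi>1" by (auto simp: inj_on_def \<phi>1_def)
  have "infsetsum F UNIV = infsetsum F (range \<phi>0) + infsetsum F (range \<phi>1)"
    by (subst split, rule infsetsum_Un_disjoint[OF abs_summable_on_subset[OF sF] abs_summable_on_subset[OF sF] disj]) auto
  also have "infsetsum F (range \<phi>0) = infsetsum (\<lambda>x. F (\<phi>0 x)) UNIV"
    by (rule infsetsum_reindex[OF inj0])
  also have "(\<lambda>x. F (\<phi>0 x)) = (\<lambda>(i,j). gt q (-1) (a*b) i * gt q 0 (a/b) j)"
  proof (intro ext, clarify)
    fix i j :: int
    have s1: "(-1::complex) powi (i+j) * (-1) powi (i-j) = 1"
    proof -
      have "(-1::complex) powi (i+j) * (-1) powi (i-j) = (-1) powi ((i+j)+(i-j))"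
        by (rule padd[symmetric]) simp
      also have "(i+j)+(i-j) = 2*i" by simp
      finally show ?thesis by (simp only: pm1_even)
    qed
    have e: "Ci (i+j) + Ci (i-j) = (i*i + (-1)*i) + (j*j + 0*j)"
    proof -
      have "2 * (Ci (i+j) + Ci (i-j)) = 2 * ((i*i + (-1)*i) + (j*j + 0*j))"
        by (simp only: distrib_left Ci2) (simp add: algebra_simps)
      thus ?thesis by simp
    qed
    have s2: "q powi Ci (i+j) * q powi Ci (i-j) = q powi (i*i + (-1)*i) * q powi (j*j + 0*j)"
      using padd[OF q(2), symmetric] e by metis
    have s3: "a powi (i+j) * b powi (i-j) = (a*b) powi i * (a/b) powi j"
      using a b by (simp add: padd power_int_diff power_int_mult_distrib power_int_divide_distrib)
    have "jt q a (i+j) * jt q b (i-j) = ((-1) powi (i+j) * (-1) powi (i-j)) * (q powi Ci (i+j) * q powi Ci (i-j))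
        * (a powi (i+j) * b powi (i-j))"
      by (simp add: jt_def mult_ac)
    also have "\<dots> = gt q (-1) (a*b) i * gt q 0 (a/b) j"
      unfolding s1 s2 s3 gt_def by (simp add: mult_ac)
    finally show "F (\<phi>0 (i,j)) = gt q (-1) (a*b) i * gt q 0 (a/b) j"
      by (simp add: F_def \<phi>0_def)
  qed
  also have "infsetsum (\<lambda>(i,j). gt q (-1) (a*b) i * gt q 0 (a/b) j) UNIV = G q (-1) (a*b) * G q 0 (a/b)"
    unfolding G_def by (rule prod_infsetsum) (intro gt_summable q)+
  also have "infsetsum F (range \<phi>1) = infsetsum (\<lambda>x. F (\<phi>1 x)) UNIV"
    by (rule infsetsum_reindex[OF inj1])
  also have "(\<lambda>x. F (\<phi>1 x)) = (\<lambda>(i,j). (- a) * (gt q 0 (a*b) i * gt q 1 (a/b) j))"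
  proof (intro ext, clarify)
    fix i j :: int
    have s1: "(-1::complex) powi (i+j+1) * (-1) powi (i-j) = -1"
    proof -
      have "(-1::complex) powi (i+j+1) * (-1) powi (i-j) = (-1) powi ((i+j+1)+(i-j))"
        by (rule padd[symmetric]) simp
      also have "(i+j+1)+(i-j) = 2*i + 1" by simp
      also have "(-1::complex) powi (2*i + 1) = (-1) powi (2*i) * (-1) powi 1"
        by (rule padd) simp
      finally show ?thesis by (simp only: pm1_even) simp
    qed
    have e: "Ci (i+j+1) + Ci (i-j) = (i*i + 0*i) + (j*j + 1*j)"
    proof -
      have "2 * (Ci (i+j+1) + Ci (i-j)) = 2 * ((i*i + 0*i) + (j*j + 1*j))"
        by (simp only: distrib_left Ci2) (simp add: algebra_simps)
      thus ?thesis by simp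
    qed
    have s2: "q powi Ci (i+j+1) * q powi Ci (i-j) = q powi (i*i + 0*i) * q powi (j*j + 1*j)"
      using padd[OF q(2), symmetric] e by metis
    have s3: "a powi (i+j+1) * b powi (i-j) = a * ((a*b) powi i * (a/b) powi j)"
      using a b by (simp add: padd power_int_diff power_int_mult_distrib power_int_divide_distrib)
    have "jt q a (i+j+1) * jt q b (i-j) = ((-1) powi (i+j+1) * (-1) powi (i-j)) * (q powi Ci (i+j+1) * q powi Ci (i-j))
        * (a powi (i+j+1) * b powi (i-j))"
      by (simp add: jt_def mult_ac)
    also have "\<dots> = (- a) * (gt q 0 (a*b) i * gt q 1 (a/b) j)"
      unfolding s1 s2 s3 gt_def by (simp add: mult_ac)
    finally show "F (\<phi>1 (i,j)) = (- a) * (gt q 0 (a*b) i * gt q 1 (a/b) j)"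
      by (simp add: F_def \<phi>1_def)
  qed
  also have "infsetsum (\<lambda>(i,j). (- a) * (gt q 0 (a*b) i * gt q 1 (a/b) j)) UNIV
      = (- a) * infsetsum (\<lambda>(i,j). gt q 0 (a*b) i * gt q 1 (a/b) j) UNIV"
  proof -
    have sp: "Infinite_Set_Sum.abs_summable_on (\<lambda>(i,j). gt q 0 (a*b) i * gt q 1 (a/b) j) UNIV"
      using abs_summable_on_product[OF _ _ gt_summable[OF q] gt_summable[OF q], of 0 "a*b" 1 "a/b"] by simp
    show ?thesis by (subst infsetsum_cmult_right[symmetric]) (use sp in \<open>auto simp: case_prod_unfold\<close>)
  qed
  also have "infsetsum (\<lambda>(i,j). gt q 0 (a*b) i * gt q 1 (a/b) j) UNIV = G q 0 (a*b) * G q 1 (a/b)"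
    unfolding G_def by (rule prod_infsetsum) (intro gt_summable q)+
  finally show ?thesis using SS by simp
qed

lemma G_shift:
  assumes q: "norm q < 1" "q \<noteq> 0" and w: "w \<noteq> 0"
  shows "G q (-1) w = w * G q 1 w"
proof -
  have bij: "bij_betw (\<lambda>k::int. k + 1) UNIV UNIV"
    by (rule bij_betwI[of _ _ _ "\<lambda>k. k - 1"]) auto
  have "G q (-1) w = infsetsum (\<lambda>k. gt q (-1) w (k + 1)) UNIV"
    unfolding G_def by (rule infsetsum_reindex_bij_betw[OF bij, symmetric])
  also have "(\<lambda>k. gt q (-1) w (k + 1)) = (\<lambda>k. w * gt q 1 w k)"
  proof
    fix k :: int
    have e: "(k+1)*(k+1) + (-1)*(k+1) = k*k + 1*k" by (simp add: algebra_simps)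
    have "gt q (-1) w (k + 1) = q powi ((k+1)*(k+1) + (-1)*(k+1)) * w powi (k+1)"
      by (simp only: gt_def)
    also have "\<dots> = q powi (k*k + 1*k) * w powi (k+1)" by (simp only: e)
    also have "\<dots> = w * gt q 1 w k"
      using w by (simp add: gt_def power_int_add_1' mult_ac)
    finally show "gt q (-1) w (k + 1) = w * gt q 1 w k" .
  qed
  also have "infsetsum (\<lambda>k. w * gt q 1 w k) UNIV = w * G q 1 w"
    unfolding G_def by (rule infsetsum_cmult_right) (intro gt_summable q)
  finally show ?thesis .
qed

lemma G_inv:
  assumes w: "w \<noteq> 0"
  shows "G q c (1/w) = G q (-c) w"
proof -
  have bij: "bij_betw (\<lambda>k::int. - k) UNIV UNIV"
    by (rule bij_betwI[of _ _ _ "\<lambda>k. - k"]) auto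
  have "G q c (1/w) = infsetsum (\<lambda>k. gt q c (1/w) (- k)) UNIV"
    unfolding G_def by (rule infsetsum_reindex_bij_betw[OF bij, symmetric])
  also have "(\<lambda>k. gt q c (1/w) (- k)) = gt q (-c) w"
  proof
    fix k :: int
    show "gt q c (1/w) (- k) = gt q (-c) w k"
      unfolding gt_def by (simp add: power_int_minus power_int_divide_distrib)
  qed
  finally show ?thesis by (simp add: G_def)
qed

lemma K1:
  assumes q: "norm q < 1" "q \<noteq> 0" and a: "a \<noteq> 0" and b: "b \<noteq> 0"
  shows "S q a * S q b = a * b * G q 1 (a*b) * G q 0 (a/b) - a * G q 0 (a*b) * G q 1 (a/b)"
  using K0[OF assms] G_shift[OF q, of "a*b"] a b by (simp add: mult_ac)

lemma alg_W:
  fixes A B C D e1 e2 e3 eR f1 f2 f3 fR :: complex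
  assumes "A \<noteq> 0" "B \<noteq> 0" "C \<noteq> 0" "D \<noteq> 0"
  defines "W1 \<equiv> A^2*D^2/(B*C)" and "W2 \<equiv> B*C" and "W3 \<equiv> B*C/D^2" and "R \<equiv> B/C"
  shows "(W1*f1*e3 - A*e1*f3)*(W2*f2*eR - B*e2*fR) - (W2*f2*e3 - D*e2*(W3*f3))*(W1*f1*eR - A*D/B*e1*(R*fR))
       = D*((W1*f1*e2 - A*D*e1*f2)*(W3*f3*eR - B/D*e3*fR))"
  using assms unfolding W1_def W2_def W3_def R_def
  by (simp add: field_simps power2_eq_square)

lemma WS:
  assumes q: "norm q < 1" "q \<noteq> 0" and nz: "A \<noteq> 0" "B \<noteq> 0" "C \<noteq> 0" "D \<noteq> 0"
  shows "S q A * S q B * S q C * S q (A*D^2/(B*C)) - S q D * S q (A*D/B) * S q (A*D/C) * S q (B*C/D)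
       = D * (S q (A*D) * S q (B/D) * S q (C/D) * S q (A*D/(B*C)))"
proof -
  define W1 where "W1 = A^2*D^2/(B*C)"
  define W2 where "W2 = B*C"
  define W3 where "W3 = B*C/D^2"
  define R where "R = B/C"
  have W3nz: "W3 \<noteq> 0" and Rnz: "R \<noteq> 0" using nz by (auto simp: W3_def R_def)
  have p1: "S q A * S q (A*D^2/(B*C)) = W1 * G q 1 W1 * G q 0 W3 - A * G q 0 W1 * G q 1 W3"
  proof -
    have e: "A * (A*D^2/(B*C)) = W1" "A / (A*D^2/(B*C)) = W3"
      using nz by (auto simp: W1_def W3_def field_simps power2_eq_square)
    have k: "S q A * S q (A*D^2/(B*C)) = A * (A*D^2/(B*C)) * G q 1 (A * (A*D^2/(B*C))) * G q 0 (A / (A*D^2/(B*C)))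
       - A * G q 0 (A * (A*D^2/(B*C))) * G q 1 (A / (A*D^2/(B*C)))"
      by (rule K1[OF q]) (use nz in auto)
    show ?thesis using k unfolding e .
  qed
  have p2: "S q B * S q C = W2 * G q 1 W2 * G q 0 R - B * G q 0 W2 * G q 1 R"
    using K1[OF q nz(2) nz(3)] by (simp add: W2_def R_def)
  have p3: "S q D * S q (B*C/D) = W2 * G q 1 W2 * G q 0 W3 - D * G q 0 W2 * (W3 * G q 1 W3)"
  proof -
    have e: "D * (B*C/D) = W2" "D / (B*C/D) = 1 / W3"
      using nz by (auto simp: W2_def W3_def field_simps power2_eq_square)
    have k: "S q D * S q (B*C/D) = D * (B*C/D) * G q 1 (D * (B*C/D)) * G q 0 (D / (B*C/D))
       - D * G q 0 (D * (B*C/D)) * G q 1 (D / (B*C/D))"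
      by (rule K1[OF q]) (use nz in auto)
    have g0: "G q 0 (1/W3) = G q 0 W3" using G_inv[OF W3nz, of q 0] by simp
    have g1: "G q 1 (1/W3) = W3 * G q 1 W3" using G_inv[OF W3nz, of q 1] G_shift[OF q W3nz] by simp
    show ?thesis using k unfolding e g0 g1 .
  qed
  have p4: "S q (A*D/B) * S q (A*D/C) = W1 * G q 1 W1 * G q 0 R - A*D/B * G q 0 W1 * (R * G q 1 R)"
  proof -
    have e: "(A*D/B) * (A*D/C) = W1" "(A*D/B) / (A*D/C) = 1 / R"
      using nz by (auto simp: W1_def R_def field_simps power2_eq_square)
    have k: "S q (A*D/B) * S q (A*D/C) = (A*D/B) * (A*D/C) * G q 1 ((A*D/B) * (A*D/C)) * G q 0 ((A*D/B) / (A*D/C))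
       - (A*D/B) * G q 0 ((A*D/B) * (A*D/C)) * G q 1 ((A*D/B) / (A*D/C))"
      by (rule K1[OF q]) (use nz in auto)
    have g0: "G q 0 (1/R) = G q 0 R" using G_inv[OF Rnz, of q 0] by simp
    have g1: "G q 1 (1/R) = R * G q 1 R" using G_inv[OF Rnz, of q 1] G_shift[OF q Rnz] by simp
    show ?thesis using k unfolding e g0 g1 .
  qed
  have p5: "S q (A*D) * S q (A*D/(B*C)) = W1 * G q 1 W1 * G q 0 W2 - A*D * G q 0 W1 * G q 1 W2"
  proof -
    have e: "(A*D) * (A*D/(B*C)) = W1" "(A*D) / (A*D/(B*C)) = W2"
      using nz by (auto simp: W1_def W2_def field_simps power2_eq_square)
    have k: "S q (A*D) * S q (A*D/(B*C)) = (A*D) * (A*D/(B*C)) * G q 1 ((A*D) * (A*D/(B*C))) * G q 0 ((A*D) / (A*D/(B*C)))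
       - (A*D) * G q 0 ((A*D) * (A*D/(B*C))) * G q 1 ((A*D) / (A*D/(B*C)))"
      by (rule K1[OF q]) (use nz in auto)
    show ?thesis using k unfolding e .
  qed
  have p6: "S q (B/D) * S q (C/D) = W3 * G q 1 W3 * G q 0 R - B/D * G q 0 W3 * G q 1 R"
  proof -
    have e: "(B/D) * (C/D) = W3" "(B/D) / (C/D) = R"
      using nz by (auto simp: W3_def R_def field_simps power2_eq_square)
    have k: "S q (B/D) * S q (C/D) = (B/D) * (C/D) * G q 1 ((B/D) * (C/D)) * G q 0 ((B/D) / (C/D))
       - (B/D) * G q 0 ((B/D) * (C/D)) * G q 1 ((B/D) / (C/D))"
      by (rule K1[OF q]) (use nz in auto)
    show ?thesis using k unfolding e .
  qed
  have "S q A * S q B * S q C * S q (A*D^2/(B*C)) - S q D * S q (A*D/B) * S q (A*D/C) * S q (B*C/D)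
      = (S q A * S q (A*D^2/(B*C))) * (S q B * S q C) - (S q D * S q (B*C/D)) * (S q (A*D/B) * S q (A*D/C))"
    by (simp add: mult_ac)
  also have "\<dots> = D * ((S q (A*D) * S q (A*D/(B*C))) * (S q (B/D) * S q (C/D)))"
    unfolding p1 p2 p3 p4 p5 p6 unfolding W1_def W2_def W3_def R_def
    by (rule alg_W[OF nz])
  finally show ?thesis by (simp add: mult_ac)
qed

lemma theta_S:
  assumes q: "norm q < 1" "q \<noteq> 0" and z: "z \<noteq> 0"
  shows "theta z q = S q z / qpoch_inf q q"
  using jtp[OF q z] P_nz[OF q(1)] by (simp add: S_def field_simps)

lemma qpoch_inf_0: "qpoch_inf x 0 = 1 - x"
proof -
  have "qpoch_inf x 0 = (\<Prod>n\<in>{0}. 1 - x * 0 ^ n)"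
    unfolding qpoch_inf_def by (rule prodinf_finite) auto
  thus ?thesis by simp
qed

lemma theta_0: "theta x 0 = 1 - x"
  using qpoch_inf_0[of x] qpoch_inf_0[of "0/x"] by (simp add: theta_def)

theorem W:
  assumes p: "norm p < 1" and nz: "A \<noteq> 0" "B \<noteq> 0" "C \<noteq> 0" "D \<noteq> 0"
  shows "theta A p * theta B p * theta C p * theta (A*D^2/(B*C)) p - theta D p * theta (A*D/B) p * theta (A*D/C) p * theta (B*C/D) p
       = D * (theta (A*D) p * theta (B/D) p * theta (C/D) p * theta (A*D/(B*C)) p)"
proof (cases "p = 0")
  case True
  thus ?thesis using nz by (simp add: theta_0 field_simps) (simp add: algebra_simps power2_eq_square)
next
  case False
  define P where "P = qpoch_inf p p"
  have P: "P \<noteq> 0" using P_nz[OF p] by (simp add: P_def)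
  have th: "theta z p = S p z / P" if "z \<noteq> 0" for z
    using theta_S[OF p False that] by (simp add: P_def)
  have "theta A p * theta B p * theta C p * theta (A*D^2/(B*C)) p - theta D p * theta (A*D/B) p * theta (A*D/C) p * theta (B*C/D) p
      = (S p A * S p B * S p C * S p (A*D^2/(B*C)) - S p D * S p (A*D/B) * S p (A*D/C) * S p (B*C/D)) / P^4"
    using nz by (simp add: th diff_divide_distrib power4_eq_xxxx)
  also have "\<dots> = D * (S p (A*D) * S p (B/D) * S p (C/D) * S p (A*D/(B*C))) / P^4"
    by (simp only: WS[OF p False nz])
  also have "\<dots> = D * (theta (A*D) p * theta (B/D) p * theta (C/D) p * theta (A*D/(B*C)) p)"
    using nz by (simp add: th power4_eq_xxxx)
  finally show ?thesis .
qed

lemma W_gen: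
  assumes p: "norm p < 1" and nz: "A \<noteq> 0" "B \<noteq> 0" "C \<noteq> 0" "D \<noteq> 0"
    and e: "X1 = A*D^2/(B*C)" "X0 = D" "X2 = A*D/B" "X3 = A*D/C" "X4 = B*C/D"
           "X5 = A*D" "X6 = B/D" "X7 = C/D" "X8 = A*D/(B*C)"
  shows "theta A p * theta B p * theta C p * theta X1 p - theta X0 p * theta X2 p * theta X3 p * theta X4 p
       = D * (theta X5 p * theta X6 p * theta X7 p * theta X8 p)"
  unfolding e by (rule W[OF p nz])

lemma ep_Suc: "etheta_poch x y p (Suc n) = etheta_poch x y p n * theta (x * y ^ n) p"
  by (simp add: etheta_poch_def)

lemma ep_shift: "etheta_poch x y p (Suc n) = theta x p * etheta_poch (x * y) y p n"
  unfolding etheta_poch_def by (subst prod.lessThan_Suc_shift) (simp add: mult.assoc)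

lemma step_alg:
  fixes d th0 Dn Y Th Th' N N' M1 X Z qq :: complex
  assumes "d \<noteq> 0" "th0 \<noteq> 0" "Dn \<noteq> 0" "Y \<noteq> 0"
    and "Th * N = M1" "Th * N' = M1 * X" "X - Y = d * qq * Z"
  shows "Th / (d * th0) * (N / Dn) - Th' / (d * th0) + Z / th0 * (M1 / (Dn * Y)) * qq
       = Th / (d * th0) * (N' / (Dn * Y)) - Th' / (d * th0)"
proof -
  have X: "X = d * qq * Z + Y" using assms(7) by (simp add: diff_eq_eq)
  have "Th / (d * th0) * (N / Dn) = M1 / (d * th0 * Dn)" using assms(5) by simp
  moreover have "Th / (d * th0) * (N' / (Dn * Y)) = M1 * X / (d * th0 * (Dn * Y))" using assms(6) by simp
  ultimately show ?thesis using assms(1-4) unfolding X by (simp add: field_simps)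
qed

theorem mainTheorem10:
  fixes a b c d q r s t p :: complex and n :: nat
  assumes hp: "norm p < 1"
    and nz: "a \<noteq> 0" "b \<noteq> 0" "c \<noteq> 0" "d \<noteq> 0" "q \<noteq> 0" "r \<noteq> 0" "s \<noteq> 0" "t \<noteq> 0"
    and hden0: "theta (a * d) p * theta (b/d) p * theta (c/d) p * theta (a * d/(b * c)) p \<noteq> 0"
    and hdenk: "\<And>k. k \<le> n \<Longrightarrow>
        etheta_poch (d * q) q p k * etheta_poch (a * d * s * t/(b * q)) (s * t/q) p k
        * etheta_poch (a * d * r * t/(c * q)) (r * t/q) p k * etheta_poch (b * c * r * s/(d * q)) (r * s/q) p k \<noteq> 0"
  shows "(\<Sum>k=0..n.
      (theta (a * d * (r * s * t/q)^k) p * theta (b * r^k/(d * q^k)) p * theta (c * s^k/(d * q^k)) p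
         * theta (a * d * t^k/(b * c * q^k)) p)
      / (theta (a * d) p * theta (b/d) p * theta (c/d) p * theta (a * d/(b * c)) p)
      * ((etheta_poch a (r * s * t/q^2) p k * etheta_poch b r p k * etheta_poch c s p k
            * etheta_poch (a * d^2/(b * c)) t p k)
         / (etheta_poch (d * q) q p k * etheta_poch (a * d * s * t/(b * q)) (s * t/q) p k
            * etheta_poch (a * d * r * t/(c * q)) (r * t/q) p k * etheta_poch (b * c * r * s/(d * q)) (r * s/q) p k))
      * q^k)
    = (theta a p * theta b p * theta c p * theta (a * d^2/(b * c)) p)
        / (d * (theta (a * d) p * theta (b/d) p * theta (c/d) p * theta (a * d/(b * c)) p))
      * ((etheta_poch (a * r * s * t/q^2) (r * s * t/q^2) p n * etheta_poch (b * r) r p n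
            * etheta_poch (c * s) s p n * etheta_poch (a * d^2 * t/(b * c)) t p n)
         / (etheta_poch (d * q) q p n * etheta_poch (a * d * s * t/(b * q)) (s * t/q) p n
            * etheta_poch (a * d * r * t/(c * q)) (r * t/q) p n * etheta_poch (b * c * r * s/(d * q)) (r * s/q) p n))
      - (theta d p * theta (a * d/b) p * theta (a * d/c) p * theta (b * c/d) p)
        / (d * (theta (a * d) p * theta (b/d) p * theta (c/d) p * theta (a * d/(b * c)) p))"
proof -
  note nzs = nz
  define th0 where "th0 = theta (a * d) p * theta (b/d) p * theta (c/d) p * theta (a * d/(b * c)) p"
  define Th where "Th = theta a p * theta b p * theta c p * theta (a * d^2/(b * c)) p"
  define Th' where "Th' = theta d p * theta (a * d/b) p * theta (a * d/c) p * theta (b * c/d) p"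
  define M where "M k = etheta_poch a (r * s * t/q^2) p k * etheta_poch b r p k * etheta_poch c s p k
            * etheta_poch (a * d^2/(b * c)) t p k" for k
  define Dn where "Dn k = etheta_poch (d * q) q p k * etheta_poch (a * d * s * t/(b * q)) (s * t/q) p k
            * etheta_poch (a * d * r * t/(c * q)) (r * t/q) p k * etheta_poch (b * c * r * s/(d * q)) (r * s/q) p k" for k
  define N where "N k = etheta_poch (a * r * s * t/q^2) (r * s * t/q^2) p k * etheta_poch (b * r) r p k
            * etheta_poch (c * s) s p k * etheta_poch (a * d^2 * t/(b * c)) t p k" for k
  define Z where "Z k = theta (a * d * (r * s * t/q)^k) p * theta (b * r^k/(d * q^k)) p * theta (c * s^k/(d * q^k)) p
         * theta (a * d * t^k/(b * c * q^k)) p" for k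
  define X where "X k = theta (a * (r * s * t/q^2)^k) p * theta (b * r^k) p * theta (c * s^k) p * theta (a * d^2/(b * c) * t^k) p" for k
  define Y where "Y k = theta (d * q * q^k) p * theta (a * d * s * t/(b * q) * (s * t/q)^k) p * theta (a * d * r * t/(c * q) * (r * t/q)^k) p
         * theta (b * c * r * s/(d * q) * (r * s/q)^k) p" for k
  have th0nz: "th0 \<noteq> 0" using hden0 by (simp add: th0_def)
  have Dnz: "Dn k \<noteq> 0" if "k \<le> n" for k using hdenk[OF that] by (simp add: Dn_def)
  have MS: "M (Suc k) = M k * X k" for k by (simp add: M_def X_def ep_Suc mult_ac)
  have DS: "Dn (Suc k) = Dn k * Y k" for k by (simp add: Dn_def Y_def ep_Suc mult_ac)
  have TN: "Th * N k = M (Suc k)" for k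
  proof -
    have e1: "a * (r * s * t/q^2) = a * r * s * t/q^2" by simp
    have e2: "a * d^2/(b * c) * t = a * d^2 * t/(b * c)" by simp
    show ?thesis unfolding M_def N_def Th_def ep_shift e1 e2 by (simp add: mult_ac)
  qed
  have Wm: "X (Suc k) - Y k = d * q^(Suc k) * Z (Suc k)" for k
  proof -
    have "theta (a * (r * s * t/q^2)^Suc k) p * theta (b * r^Suc k) p * theta (c * s^Suc k) p * theta (a * d^2/(b * c) * t^Suc k) p
        - theta (d * q * q^k) p * theta (a * d * s * t/(b * q) * (s * t/q)^k) p * theta (a * d * r * t/(c * q) * (r * t/q)^k) p
          * theta (b * c * r * s/(d * q) * (r * s/q)^k) p
        = (d * q^Suc k) * (theta (a * d * (r * s * t/q)^Suc k) p * theta (b * r^Suc k/(d * q^Suc k)) p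
          * theta (c * s^Suc k/(d * q^Suc k)) p * theta (a * d * t^Suc k/(b * c * q^Suc k)) p)"
      by (rule W_gen[OF hp]) (use nz in \<open>simp_all add: power_mult_distrib power_divide field_simps power2_eq_square\<close>)
    thus ?thesis by (simp add: X_def Y_def Z_def mult_ac)
  qed
  have base: "Th - Th' = d * th0"
    unfolding Th_def Th'_def th0_def by (rule W[OF hp nz(1-4)])
  have claim: "m \<le> n \<Longrightarrow> (\<Sum>k=0..m. Z k / th0 * (M k / Dn k) * q^k)
      = Th / (d * th0) * (N m / Dn m) - Th' / (d * th0)" for m
  proof (induction m)
    case 0
    have "Z 0 = th0" by (simp add: Z_def th0_def)
    moreover have "M 0 = 1" "Dn 0 = 1" "N 0 = 1" by (simp_all add: M_def Dn_def N_def etheta_poch_def)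
    ultimately show ?case using th0nz nz(4) base by (simp add: field_simps)
  next
    case (Suc m)
    have mn: "m \<le> n" using Suc.prems by simp
    have DSnz: "Dn m * Y m \<noteq> 0" using Dnz[OF Suc.prems] DS[of m] by simp
    hence Ynz: "Y m \<noteq> 0" by simp
    have "(\<Sum>k=0..Suc m. Z k / th0 * (M k / Dn k) * q^k)
        = Th / (d * th0) * (N m / Dn m) - Th' / (d * th0) + Z (Suc m) / th0 * (M (Suc m) / (Dn m * Y m)) * q^Suc m"
      using Suc.IH[OF mn] by (simp add: DS)
    also have "\<dots> = Th / (d * th0) * (N (Suc m) / (Dn m * Y m)) - Th' / (d * th0)"
    proof (rule step_alg)
      show "d \<noteq> 0" "th0 \<noteq> 0" "Dn m \<noteq> 0" "Y m \<noteq> 0" using nz(4) th0nz Dnz[OF mn] Ynz by auto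
      show "Th * N m = M (Suc m)" by (rule TN)
      show "Th * N (Suc m) = M (Suc m) * X (Suc m)" by (simp add: TN MS)
      show "X (Suc m) - Y m = d * q ^ Suc m * Z (Suc m)" by (rule Wm)
    qed
    also have "\<dots> = Th / (d * th0) * (N (Suc m) / Dn (Suc m)) - Th' / (d * th0)" by (simp add: DS)
    finally show ?case .
  qed
  from claim[OF order.refl] show ?thesis
    unfolding Z_def th0_def M_def Dn_def Th_def Th'_def N_def .
qed

end
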